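(* Let $\Sigma$ be a finite alphabet with $|\Sigma|\ge 2$, and let $\delta$ be a uniform Hamming compatible metric on $\Sigma^*$. Then $\delta(u,v)\ge d_2(u,v)$ for all $u,v\in\Sigma^*$. In particular, $\delta(u,v)\to\infty$ as $|l(u)-l(v)|\to\infty$.
   Context: For a finite alphabet $\Sigma$, $\Sigma_n$ denotes the set of words of length $n$ over $\Sigma$, $\Sigma^*=\bigcup_{n\ge 0}\Sigma_n$ is the set of all finite words, $l(u)$ is the length of $u$, and $\varepsilon$ is the empty word. $H$ denotes the usual Hamming distance between two words of equal length (the number of positions where they differ). The truncated Hamming function is defined for arbitrary $u,v\in\Sigma^*$ as follows: if $l(u)\ge l(v)$, let $\underline{u}$ be the prefix of $u$ of length $l(v)$ and $\underline{v}=v$ (symmetrically if $l(v)\ge l(u)$), and $H(\underline{u},\underline{v})$ is the Hamming distance of these two equal-length words. All metrics are integer-valued. A metric $\delta$ on $\Sigma^*$ is Hamming compatible if $\delta(u,v)=H(u,v)$ whenever $l(u)=l(v)$. Define $d_2(u,v)=H(\underline{u},\underline{v})+\lceil |l(u)-l(v)|/2\rceil$. Two words $u,v$ of the same length $n$ are Hamming opposites if $H(u,v)=n$. For a Hamming compatible metric $\delta$ put $\gamma(u,v)=\delta(u,v)-H(\underline{u},\underline{v})$. $\delta$ is called uniform if for every $n$ and every pair of Hamming opposites $u,v\in\Sigma_n$ one has $\gamma(u,w)=\gamma(v,w)$ for all $w\in\Sigma^*$. *)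

theory Defs
  imports Complex_Main
begin

definition hamming :: "'a list \<Rightarrow> 'a list \<Rightarrow> nat" where
  "hamming u v = card {i. i < length u \<and> i < length v \<and> u ! i \<noteq> v ! i}"

definition trunc_hamming :: "'a list \<Rightarrow> 'a list \<Rightarrow> nat" where
  "trunc_hamming u v =
     (let m = min (length u) (length v) in hamming (take m u) (take m v))"

definition d2 :: "'a list \<Rightarrow> 'a list \<Rightarrow> int" where
  "d2 u v = int (trunc_hamming u v)
            + \<lceil>real_of_int \<bar>int (length u) - int (length v)\<bar> / 2\<rceil>"

definition is_metric :: "('a list \<Rightarrow> 'a list \<Rightarrow> int) \<Rightarrow> bool" where
  "is_metric \<delta> \<longleftrightarrow>
     (\<forall>u v. \<delta> u v \<ge> 0) \<and>
     (\<forall>u v. \<delta> u v = 0 \<longleftrightarrow> u = v) \<and>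
     (\<forall>u v. \<delta> u v = \<delta> v u) \<and>
     (\<forall>u v w. \<delta> u w \<le> \<delta> u v + \<delta> v w)"

definition hamming_compatible :: "('a list \<Rightarrow> 'a list \<Rightarrow> int) \<Rightarrow> bool" where
  "hamming_compatible \<delta> \<longleftrightarrow>
     (\<forall>u v. length u = length v \<longrightarrow> \<delta> u v = int (hamming u v))"

definition hamming_opposites :: "'a list \<Rightarrow> 'a list \<Rightarrow> bool" where
  "hamming_opposites u v \<longleftrightarrow> length u = length v \<and> hamming u v = length u"

definition gamma :: "('a list \<Rightarrow> 'a list \<Rightarrow> int) \<Rightarrow> 'a list \<Rightarrow> 'a list \<Rightarrow> int" where
  "gamma \<delta> u v = \<delta> u v - int (trunc_hamming u v)"

definition uniform :: "('a list \<Rightarrow> 'a list \<Rightarrow> int) \<Rightarrow> bool" where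
  "uniform \<delta> \<longleftrightarrow>
     (\<forall>u v. hamming_opposites u v \<longrightarrow> (\<forall>w. gamma \<delta> u w = gamma \<delta> v w))"

end

theory Submission
  imports Defs
begin

lemma trunc_le:
  assumes "length v \<le> length u"
  shows "trunc_hamming u v = card {i. i < length v \<and> u!i \<noteq> v!i}"
proof -
  have "min (length u) (length v) = length v" using assms by simp
  then show ?thesis unfolding trunc_hamming_def hamming_def Let_def
    by (intro arg_cong[where f=card]) (auto simp: nth_take min_absorb2 assms)
qed

lemma main_le:
  fixes \<delta> :: "('a::finite) list \<Rightarrow> 'a list \<Rightarrow> int"
  assumes card: "card (UNIV :: 'a set) \<ge> 2"
    and met: "is_metric \<delta>"
    and hc: "hamming_compatible \<delta>"
    and un: "uniform \<delta>"
    and len: "length v \<le> length u"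
  shows "\<delta> u v \<ge> d2 u v"
proof -
  have ex: "\<exists>b::'a. b \<noteq> a" for a
  proof (rule ccontr)
    assume "\<not> ?thesis"
    then have u: "(UNIV::'a set) = {a}" by auto
    have "card (UNIV::'a set) = 1" by (simp only: u) simp
    then show False using card by linarith
  qed
  define f where "f a = (SOME b::'a. b \<noteq> a)" for a
  have f: "f a \<noteq> a" for a unfolding f_def using someI_ex[OF ex[of a]] by blast
  define n where "n = length v"
  define ub where "ub = map (\<lambda>i. if i < n \<and> u!i \<noteq> v!i then v!i else f (u!i)) [0..<length u]"
  have lub: "length ub = length u" by (simp add: ub_def)
  have ubi: "i < length u \<Longrightarrow> ub!i = (if i < n \<and> u!i \<noteq> v!i then v!i else f (u!i))" for i
    by (simp add: ub_def)
  have diff: "i < length u \<Longrightarrow> u!i \<noteq> ub!i" for i using ubi f by (metis)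
  have "{i. i < length u \<and> i < length ub \<and> u ! i \<noteq> ub ! i} = {..<length u}"
    using diff lub by auto
  then have hu: "hamming u ub = length u" unfolding hamming_def by simp
  then have opp: "hamming_opposites u ub" unfolding hamming_opposites_def using lub by simp
  have g: "gamma \<delta> u v = gamma \<delta> ub v" using un opp unfolding uniform_def by blast
  have duub: "\<delta> u ub = int (length u)" using hc hu lub unfolding hamming_compatible_def by metis
  have tri: "\<delta> u ub \<le> \<delta> u v + \<delta> ub v" using met unfolding is_metric_def by metis
  have t1: "trunc_hamming u v = card {i. i < n \<and> u!i \<noteq> v!i}" using trunc_le[OF len] n_def by simp
  have t2: "trunc_hamming ub v = card {i. i < n \<and> u!i = v!i}"
  proof -
    have "trunc_hamming ub v = card {i. i < n \<and> ub!i \<noteq> v!i}" using trunc_le[of v ub] len lub n_def by simp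
    also have "{i. i < n \<and> ub!i \<noteq> v!i} = {i. i < n \<and> u!i = v!i}"
      using ubi len n_def f by (auto split: if_splits)
    finally show ?thesis .
  qed
  have "card {i. i < n \<and> u!i \<noteq> v!i} + card {i. i < n \<and> u!i = v!i} = n"
  proof -
    have "card ({i. i < n \<and> u!i \<noteq> v!i} \<union> {i. i < n \<and> u!i = v!i}) = card {i. i < n \<and> u!i \<noteq> v!i} + card {i. i < n \<and> u!i = v!i}"
      by (rule card_Un_disjoint) auto
    moreover have "{i. i < n \<and> u!i \<noteq> v!i} \<union> {i. i < n \<and> u!i = v!i} = {..<n}" by auto
    ultimately show ?thesis by simp
  qed
  then have tsum: "trunc_hamming u v + trunc_hamming ub v = n" using t1 t2 by simp
  then have tsum': "int (trunc_hamming u v) + int (trunc_hamming ub v) = int n" by linarith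
  have "int (length u) \<le> int n + 2 * gamma \<delta> u v"
    using tri duub g tsum' unfolding gamma_def by (smt (verit))
  then have "real_of_int \<bar>int (length u) - int (length v)\<bar> / 2 \<le> real_of_int (gamma \<delta> u v)"
    using len n_def by simp
  then have "\<lceil>real_of_int \<bar>int (length u) - int (length v)\<bar> / 2\<rceil> \<le> gamma \<delta> u v"
    by (simp add: ceiling_le_iff)
  then show ?thesis unfolding d2_def gamma_def by linarith
qed

lemma trunc_sym: "trunc_hamming u v = trunc_hamming v u"
  unfolding trunc_hamming_def hamming_def Let_def by (simp add: min.commute conj_commute eq_commute)

theorem theorem4p9:
  fixes \<delta> :: "('a::finite) list \<Rightarrow> 'a list \<Rightarrow> int"
  assumes "card (UNIV :: 'a set) \<ge> 2"
    and "is_metric \<delta>"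
    and "hamming_compatible \<delta>"
    and "uniform \<delta>"
  shows "(\<forall>u v. \<delta> u v \<ge> d2 u v) \<and>
         (\<forall>M::int. \<exists>N::nat. \<forall>u v.
            N \<le> nat \<bar>int (length u) - int (length v)\<bar> \<longrightarrow> M \<le> \<delta> u v)"
proof -
  have A: "\<delta> u v \<ge> d2 u v" for u v :: "'a list"
  proof (cases "length v \<le> length u")
    case True then show ?thesis using main_le assms by blast
  next
    case False
    then have "\<delta> v u \<ge> d2 v u" using main_le[of \<delta> u v] assms by fastforce
    moreover have "\<delta> v u = \<delta> u v" using assms(2) unfolding is_metric_def by metis
    moreover have "d2 v u = d2 u v" unfolding d2_def using trunc_sym[of u v] by (simp add: abs_minus_commute)
    ultimately show ?thesis by simp
  qed
  have B: "\<exists>N::nat. \<forall>u v. N \<le> nat \<bar>int (length u) - int (length v)\<bar> \<longrightarrow> M \<le> \<delta> u v" for M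
  proof (intro exI allI impI)
    fix u v :: "'a list"
    assume h: "nat (2 * M) \<le> nat \<bar>int (length u) - int (length v)\<bar>"
    define D where "D = \<bar>int (length u) - int (length v)\<bar>"
    have "2 * M \<le> D" using h D_def by linarith
    then have "real_of_int M \<le> real_of_int D / 2" by linarith
    also have "\<dots> \<le> real_of_int \<lceil>real_of_int D / 2\<rceil>" by (rule le_of_int_ceiling)
    finally have "M \<le> \<lceil>real_of_int D / 2\<rceil>" by linarith
    also have "\<dots> \<le> d2 u v" unfolding d2_def D_def by simp
    also have "\<dots> \<le> \<delta> u v" by (rule A)
    finally show "M \<le> \<delta> u v" .
  qed
  show ?thesis using A B by blast
qed

end
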